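(* In an $m$-partial SCS, let $r$ and $r'$ be rings (not necessarily distinct) that cross each other at a crossing point $c$, and let $u$ and $u'$ be robots in $r$ and $r'$, respectively. If there are two paths of equal length, one from $u$ to $c$ in $r$ and one from $u'$ to $c$ in $r'$ (each possibly longer than its ring), then neither $u$ nor $u'$ is starving.
   Context: Let $T=\{C_1,\dots,C_n\}$ be pairwise disjoint unit circles in the plane (trajectories) and $\epsilon<0.5$ a communication range. The graph of potential links $G_\epsilon(T)$ has the circle centers as nodes and an edge $\{i,j\}$ whenever the centers of $C_i,C_j$ are at distance at most $2+\epsilon$; it is assumed connected. Points of a circle are identified with angles (modulo $2\pi$), and a robot traverses a circle in one time unit. A schedule is a pair $(f,g)$, $f:T\to[0,2\pi)$, $g:T\to\{-1,1\}$ ($1$ = counterclockwise); the robot on $C_i$ is at angle $f(C_i)+2\pi g(C_i)t$ at time $t$. A communication graph $G=(V,E)$ is a connected spanning subgraph of $G_\epsilon(T)$. The link position $\phi_{ij}$ is the point of $C_i$ closest to $C_j$. A schedule is $G$-synchronized if for every $\{i,j\}\in E$ the robot on $C_i$ is at $\phi_{ij}$ exactly when the robot on $C_j$ is at $\phi_{ji}$. An SCS with communication graph $G$ consists of $n$ robots, one per circle, moving under a $G$-synchronized schedule with $g(C_i)=-g(C_j)$ for all $\{i,j\}\in E$. Shifting protocol: when a robot on $C_i$ reaches $\phi_{ij}$ and there is no robot at $\phi_{ji}$, it moves to $C_j$ and thereafter follows the schedule of $C_j$. An $m$-partial SCS is obtained by removing $n-m$ robots, the remaining $m$ applying the shifting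 protocol. A surviving robot starves if every time it arrives at a link position the corresponding neighbor is absent. A ring is the closed path traversed by a starving robot (following the assigned direction on each circle and always shifting to the neighboring circle at link positions). The length of a path along a ring is the total length of circle arcs it traverses, with multiplicity, ignoring transitions between circles; a path in a ring follows the travel direction of the ring and may contain full tours. The crossing point of neighboring circles $C_i,C_j$ is the midpoint of the segment joining $\phi_{ij}$ and $\phi_{ji}$; rings pass through crossing points. *)

theory Defs
  imports Complex_Main
begin

text \<open>The plane is the complex plane. Trajectories are the unit circles with
  centers cen 0, ..., cen (n-1). Points of circle i are cen i + cis a.\<close>

definition potential_link :: "nat \<Rightarrow> (nat \<Rightarrow> complex) \<Rightarrow> real \<Rightarrow> nat \<Rightarrow> nat \<Rightarrow> bool" where
  "potential_link n cen \<epsilon> i j \<longleftrightarrow> i < n \<and> j < n \<and> i \<noteq> j \<and> cmod (cen i - cen j) \<le> 2 + \<epsilon>"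

definition graph_connected :: "nat \<Rightarrow> (nat \<Rightarrow> nat \<Rightarrow> bool) \<Rightarrow> bool" where
  "graph_connected n R \<longleftrightarrow> (\<forall>i<n. \<forall>j<n. R\<^sup>*\<^sup>* i j)"

definition trajectories_ok :: "nat \<Rightarrow> (nat \<Rightarrow> complex) \<Rightarrow> real \<Rightarrow> bool" where
  "trajectories_ok n cen \<epsilon> \<longleftrightarrow>
     (\<forall>i<n. \<forall>j<n. i \<noteq> j \<longrightarrow> 2 < cmod (cen i - cen j)) \<and> \<epsilon> < 1/2 \<and>
     graph_connected n (potential_link n cen \<epsilon>)"

definition comm_graph :: "nat \<Rightarrow> (nat \<Rightarrow> complex) \<Rightarrow> real \<Rightarrow> (nat \<Rightarrow> nat \<Rightarrow> bool) \<Rightarrow> bool" where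
  "comm_graph n cen \<epsilon> E \<longleftrightarrow>
     (\<forall>i j. E i j \<longrightarrow> potential_link n cen \<epsilon> i j) \<and> (\<forall>i j. E i j \<longrightarrow> E j i) \<and>
     graph_connected n E"

text \<open>Link position phi_ij: the point of C_i closest to C_j.\<close>
definition link_pt :: "(nat \<Rightarrow> complex) \<Rightarrow> nat \<Rightarrow> nat \<Rightarrow> complex" where
  "link_pt cen i j = cen i + sgn (cen j - cen i)"

definition cross_pt :: "(nat \<Rightarrow> complex) \<Rightarrow> nat \<Rightarrow> nat \<Rightarrow> complex" where
  "cross_pt cen i j = (link_pt cen i j + link_pt cen j i) / 2"

definition rpos :: "(nat \<Rightarrow> complex) \<Rightarrow> (nat \<Rightarrow> real) \<Rightarrow> (nat \<Rightarrow> int) \<Rightarrow> nat \<Rightarrow> real \<Rightarrow> complex" where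
  "rpos cen f g i t = cen i + cis (f i + 2 * pi * of_int (g i) * t)"

definition schedule :: "nat \<Rightarrow> (nat \<Rightarrow> real) \<Rightarrow> (nat \<Rightarrow> int) \<Rightarrow> bool" where
  "schedule n f g \<longleftrightarrow> (\<forall>i<n. 0 \<le> f i \<and> f i < 2 * pi \<and> (g i = 1 \<or> g i = -1))"

definition synchronized ::
  "(nat \<Rightarrow> complex) \<Rightarrow> (nat \<Rightarrow> nat \<Rightarrow> bool) \<Rightarrow> (nat \<Rightarrow> real) \<Rightarrow> (nat \<Rightarrow> int) \<Rightarrow> bool" where
  "synchronized cen E f g \<longleftrightarrow>
     (\<forall>i j. E i j \<longrightarrow> (\<forall>t. rpos cen f g i t = link_pt cen i j \<longleftrightarrow> rpos cen f g j t = link_pt cen j i))"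

text \<open>The data of an SCS with communication graph E (the robots are handled by the runs below).\<close>
definition scs ::
  "nat \<Rightarrow> (nat \<Rightarrow> complex) \<Rightarrow> real \<Rightarrow> (nat \<Rightarrow> nat \<Rightarrow> bool) \<Rightarrow> (nat \<Rightarrow> real) \<Rightarrow> (nat \<Rightarrow> int) \<Rightarrow> bool" where
  "scs n cen \<epsilon> E f g \<longleftrightarrow>
     trajectories_ok n cen \<epsilon> \<and> comm_graph n cen \<epsilon> E \<and> schedule n f g \<and>
     synchronized cen E f g \<and> (\<forall>i j. E i j \<longrightarrow> g i = - g j)"

definition at_link ::
  "(nat \<Rightarrow> complex) \<Rightarrow> (nat \<Rightarrow> nat \<Rightarrow> bool) \<Rightarrow> (nat \<Rightarrow> real) \<Rightarrow> (nat \<Rightarrow> int) \<Rightarrow> nat \<Rightarrow> real \<Rightarrow> nat \<Rightarrow> bool" where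
  "at_link cen E f g i t j \<longleftrightarrow> E i j \<and> rpos cen f g i t = link_pt cen i j"

text \<open>A run of a partial SCS with robot set U applying the shifting protocol from time 0.
  loc u t is the circle robot u is on at time t; it is piecewise constant and
  left-continuous (at an event time it is the circle before shifting); immediately after
  time t the robot is on the circle prescribed by the shifting protocol.\<close>
definition partial_run ::
  "nat \<Rightarrow> (nat \<Rightarrow> complex) \<Rightarrow> (nat \<Rightarrow> nat \<Rightarrow> bool) \<Rightarrow> (nat \<Rightarrow> real) \<Rightarrow> (nat \<Rightarrow> int) \<Rightarrow>
   'r set \<Rightarrow> ('r \<Rightarrow> real \<Rightarrow> nat) \<Rightarrow> bool" where
  "partial_run n cen E f g U loc \<longleftrightarrow> finite U \<and>
     (\<forall>t\<ge>0. inj_on (\<lambda>u. loc u t) U \<and> (\<forall>u\<in>U. loc u t < n)) \<and>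
     (\<forall>u\<in>U. \<forall>t>0. \<exists>\<delta>>0. \<forall>s. t - \<delta> < s \<and> s \<le> t \<longrightarrow> loc u s = loc u t) \<and>
     (\<forall>u\<in>U. \<forall>t\<ge>0. \<exists>\<delta>>0. \<forall>s. t < s \<and> s \<le> t + \<delta> \<longrightarrow>
        (if \<exists>j. at_link cen E f g (loc u t) t j \<and> (\<forall>v\<in>U. loc v t \<noteq> j)
         then at_link cen E f g (loc u t) t (loc u s) \<and> (\<forall>v\<in>U. loc v t \<noteq> loc u s)
         else loc u s = loc u t))"

definition partial_scs ::
  "nat \<Rightarrow> nat \<Rightarrow> (nat \<Rightarrow> complex) \<Rightarrow> real \<Rightarrow> (nat \<Rightarrow> nat \<Rightarrow> bool) \<Rightarrow> (nat \<Rightarrow> real) \<Rightarrow> (nat \<Rightarrow> int) \<Rightarrow>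
   'r set \<Rightarrow> ('r \<Rightarrow> real \<Rightarrow> nat) \<Rightarrow> bool" where
  "partial_scs m n cen \<epsilon> E f g U loc \<longleftrightarrow>
     scs n cen \<epsilon> E f g \<and> partial_run n cen E f g U loc \<and> card U = m \<and> m \<le> n"

definition starving ::
  "(nat \<Rightarrow> complex) \<Rightarrow> (nat \<Rightarrow> nat \<Rightarrow> bool) \<Rightarrow> (nat \<Rightarrow> real) \<Rightarrow> (nat \<Rightarrow> int) \<Rightarrow>
   'r set \<Rightarrow> ('r \<Rightarrow> real \<Rightarrow> nat) \<Rightarrow> 'r \<Rightarrow> bool" where
  "starving cen E f g U loc u \<longleftrightarrow>
     (\<forall>t\<ge>0. \<forall>j. at_link cen E f g (loc u t) t j \<longrightarrow> (\<forall>v\<in>U. loc v t \<noteq> j))"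

text \<open>The motion, from time t0 on, of a robot that always shifts at link positions
  (the motion of a starving robot): w t is its circle at time t.\<close>
definition ring_walk ::
  "nat \<Rightarrow> (nat \<Rightarrow> complex) \<Rightarrow> (nat \<Rightarrow> nat \<Rightarrow> bool) \<Rightarrow> (nat \<Rightarrow> real) \<Rightarrow> (nat \<Rightarrow> int) \<Rightarrow>
   (real \<Rightarrow> nat) \<Rightarrow> real \<Rightarrow> bool" where
  "ring_walk n cen E f g w t0 \<longleftrightarrow>
     (\<forall>t\<ge>t0. w t < n) \<and>
     (\<forall>t>t0. \<exists>\<delta>>0. \<forall>s. t - \<delta> < s \<and> s \<le> t \<longrightarrow> w s = w t) \<and>
     (\<forall>t\<ge>t0. \<exists>\<delta>>0. \<forall>s. t < s \<and> s \<le> t + \<delta> \<longrightarrow>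
        (if \<exists>j. at_link cen E f g (w t) t j
         then at_link cen E f g (w t) t (w s)
         else w s = w t))"

definition ring_of ::
  "(nat \<Rightarrow> complex) \<Rightarrow> (nat \<Rightarrow> real) \<Rightarrow> (nat \<Rightarrow> int) \<Rightarrow> (real \<Rightarrow> nat) \<Rightarrow> real \<Rightarrow> complex set" where
  "ring_of cen f g w t0 = {rpos cen f g (w t) t | t. t \<ge> t0}"

definition is_ring ::
  "nat \<Rightarrow> (nat \<Rightarrow> complex) \<Rightarrow> (nat \<Rightarrow> nat \<Rightarrow> bool) \<Rightarrow> (nat \<Rightarrow> real) \<Rightarrow> (nat \<Rightarrow> int) \<Rightarrow>
   complex set \<Rightarrow> bool" where
  "is_ring n cen E f g r \<longleftrightarrow> (\<exists>w t0. ring_walk n cen E f g w t0 \<and> r = ring_of cen f g w t0)"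

definition ring_passes ::
  "nat \<Rightarrow> (nat \<Rightarrow> complex) \<Rightarrow> (nat \<Rightarrow> nat \<Rightarrow> bool) \<Rightarrow> (nat \<Rightarrow> real) \<Rightarrow> (nat \<Rightarrow> int) \<Rightarrow>
   complex set \<Rightarrow> nat \<Rightarrow> nat \<Rightarrow> bool" where
  "ring_passes n cen E f g r i j \<longleftrightarrow>
     (\<exists>w t0 t. ring_walk n cen E f g w t0 \<and> r = ring_of cen f g w t0 \<and> t0 \<le> t \<and>
        w t = i \<and> at_link cen E f g i t j)"

definition rings_cross_at ::
  "nat \<Rightarrow> (nat \<Rightarrow> complex) \<Rightarrow> (nat \<Rightarrow> nat \<Rightarrow> bool) \<Rightarrow> (nat \<Rightarrow> real) \<Rightarrow> (nat \<Rightarrow> int) \<Rightarrow>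
   complex set \<Rightarrow> complex set \<Rightarrow> nat \<Rightarrow> nat \<Rightarrow> complex \<Rightarrow> bool" where
  "rings_cross_at n cen E f g r r' i j c \<longleftrightarrow>
     E i j \<and> c = cross_pt cen i j \<and> ring_passes n cen E f g r i j \<and> ring_passes n cen E f g r' j i"

text \<open>The path is traversed by an always-shifting robot; since it moves along unit circles
  with angular speed 2 pi, arc length L corresponds to elapsed time L / (2 pi)
  (transitions between circles contribute no length).  Full tours are allowed.\<close>
definition path_to_crossing ::
  "nat \<Rightarrow> (nat \<Rightarrow> complex) \<Rightarrow> (nat \<Rightarrow> nat \<Rightarrow> bool) \<Rightarrow> (nat \<Rightarrow> real) \<Rightarrow> (nat \<Rightarrow> int) \<Rightarrow>
   complex set \<Rightarrow> nat \<Rightarrow> real \<Rightarrow> real \<Rightarrow> nat \<Rightarrow> nat \<Rightarrow> bool" where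
  "path_to_crossing n cen E f g r i0 t0 L i j \<longleftrightarrow> 0 \<le> L \<and>
     (\<exists>w. ring_walk n cen E f g w t0 \<and> w t0 = i0 \<and>
        (\<forall>s. t0 \<le> s \<and> s \<le> t0 + L / (2 * pi) \<longrightarrow> rpos cen f g (w s) s \<in> r) \<and>
        w (t0 + L / (2 * pi)) = i \<and> at_link cen E f g i (t0 + L / (2 * pi)) j)"

end

theory Submission
  imports Defs
begin



lemma link_unique:
  assumes "scs n cen \<epsilon> E f g" "at_link cen E f g a t j" "at_link cen E f g a t k"
  shows "j = k"
proof (rule ccontr)
  assume jk: "j \<noteq> k"
  have Ej: "E a j" and Ek: "E a k" and eq: "link_pt cen a j = link_pt cen a k"
    using assms(2,3) by (auto simp: at_link_def)
  have pj: "potential_link n cen \<epsilon> a j" and pk: "potential_link n cen \<epsilon> a k"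
    using assms(1) Ej Ek by (auto simp: scs_def comm_graph_def)
  have tr: "trajectories_ok n cen \<epsilon>" using assms(1) by (auto simp: scs_def)
  define x where "x = cen j - cen a"
  define y where "y = cen k - cen a"
  have sx: "sgn x = sgn y" using eq by (simp add: link_pt_def x_def y_def)
  have jn: "j < n" "k < n" "a < n" "a \<noteq> j" "a \<noteq> k" using pj pk by (auto simp: potential_link_def)
  have nx: "2 < cmod x" "cmod x \<le> 2 + \<epsilon>" using tr pj jn unfolding x_def trajectories_ok_def potential_link_def
    by (auto simp: norm_minus_commute)
  have ny: "2 < cmod y" "cmod y \<le> 2 + \<epsilon>" using tr pk jn unfolding y_def trajectories_ok_def potential_link_def
    by (auto simp: norm_minus_commute)
  have eps: "\<epsilon> < 1/2" using tr by (simp add: trajectories_ok_def)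
  have d: "2 < cmod (x - y)" using tr jn jk unfolding x_def y_def trajectories_ok_def by auto
  have "x = cmod x *\<^sub>R sgn x" using nx by (auto simp: sgn_div_norm field_simps)  
  moreover have "y = cmod y *\<^sub>R sgn y" using ny by (auto simp: sgn_div_norm field_simps)
  hence "y = cmod y *\<^sub>R sgn x" using sx by simp 
  ultimately have "x - y = (cmod x - cmod y) *\<^sub>R sgn x" by (metis scaleR_diff_left)
  hence "cmod (x - y) = \<bar>cmod x - cmod y\<bar> * cmod (sgn x)" by simp
  also have "\<dots> \<le> \<bar>cmod x - cmod y\<bar>" by (simp add: norm_sgn)
  finally show False using nx ny eps d by linarith
qed


lemma real_ind:
  fixes P :: "real \<Rightarrow> bool"
  assumes "t0 \<le> T" "P t0"
    and L: "\<And>\<tau>. t0 < \<tau> \<Longrightarrow> \<tau> \<le> T \<Longrightarrow> (\<And>s. t0 \<le> s \<Longrightarrow> s < \<tau> \<Longrightarrow> P s) \<Longrightarrow> P \<tau>"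
    and R: "\<And>\<tau>. t0 \<le> \<tau> \<Longrightarrow> \<tau> < T \<Longrightarrow> P \<tau> \<Longrightarrow> \<exists>\<delta>>0. \<forall>s. \<tau> < s \<and> s \<le> \<tau> + \<delta> \<longrightarrow> P s"
  shows "P T"
proof -
  define S where "S = {x. t0 \<le> x \<and> x \<le> T \<and> (\<forall>s. t0 \<le> s \<and> s \<le> x \<longrightarrow> P s)}"
  define \<tau> where "\<tau> = Sup S"
  have t0S: "t0 \<in> S" using assms(1,2) by (auto simp: S_def)
  have bdd: "bdd_above S" by (auto simp: S_def bdd_above_def)
  have tt0: "t0 \<le> \<tau>" using cSup_upper[OF t0S bdd] by (simp add: \<tau>_def)
  have tT: "\<tau> \<le> T" unfolding \<tau>_def using t0S by (intro cSup_least) (auto simp: S_def)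
  have below: "P s" if "t0 \<le> s" "s < \<tau>" for s
  proof -
    from that have "s < Sup S" by (simp add: \<tau>_def)
    then obtain x where "x \<in> S" "s < x" using less_cSup_iff[OF _ bdd] t0S by blast
    thus ?thesis using that by (auto simp: S_def)
  qed
  have Pt: "P \<tau>"
  proof (cases "\<tau> = t0")
    case True thus ?thesis using assms(2) by simp
  next
    case False thus ?thesis using L[of \<tau>] tt0 tT below by auto
  qed
  have all: "\<forall>s. t0 \<le> s \<and> s \<le> \<tau> \<longrightarrow> P s" using below Pt by (auto simp: le_less)
  show ?thesis
  proof (cases "\<tau> < T")
    case True
    then obtain \<delta> where d: "\<delta> > 0" "\<forall>s. \<tau> < s \<and> s \<le> \<tau> + \<delta> \<longrightarrow> P s" using R[of \<tau>] tt0 Pt by auto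
    define x where "x = min (\<tau> + \<delta>) T"
    have "x \<in> S" unfolding S_def x_def using all d tt0 True
      by (auto simp: not_le) (metis linorder_not_le min.absorb_iff2 min.strict_boundedE order_less_le)
    hence "x \<le> \<tau>" using cSup_upper[OF _ bdd] by (simp add: \<tau>_def)
    thus ?thesis using True d(1) by (simp add: x_def)
  next
    case False thus ?thesis using tT Pt by simp
  qed
qed

lemma fin_delta:
  fixes \<tau> :: real
  assumes "finite U" "\<forall>v\<in>U. \<exists>\<delta>>0. \<forall>s. \<tau> - \<delta> < s \<and> s \<le> \<tau> \<longrightarrow> Q v s"
  shows "\<exists>\<delta>>0. \<forall>v\<in>U. \<forall>s. \<tau> - \<delta> < s \<and> s \<le> \<tau> \<longrightarrow> Q v s"
  using assms
proof (induction U rule: finite_induct)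
  case empty show ?case by (rule exI[of _ "1::real"]) simp
next
  case (insert x F)
  then obtain d1 where d1: "d1>0" "\<forall>v\<in>F. \<forall>s. \<tau>-d1<s \<and> s\<le>\<tau> \<longrightarrow> Q v s" by auto
  obtain d2 where d2: "d2>0" "\<forall>s. \<tau>-d2<s \<and> s\<le>\<tau> \<longrightarrow> Q x s" using insert.prems by auto
  show ?case using d1 d2 by (intro exI[of _ "min d1 d2"]) auto
qed

lemma pr_left:
  assumes "partial_run n cen E f g U loc" "u \<in> U" "t > 0"
  shows "\<exists>\<delta>>0. \<forall>s. t - \<delta> < s \<and> s \<le> t \<longrightarrow> loc u s = loc u t"
proof -
  have "\<forall>u\<in>U. \<forall>t>0. \<exists>\<delta>>0. \<forall>s. t - \<delta> < s \<and> s \<le> t \<longrightarrow> loc u s = loc u t"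
    using assms(1)[unfolded partial_run_def] by (elim conjE)
  thus ?thesis using assms(2,3) by blast
qed

lemma pr_right:
  assumes "partial_run n cen E f g U loc" "u \<in> U" "t \<ge> 0"
  shows "\<exists>\<delta>>0. \<forall>s. t < s \<and> s \<le> t + \<delta> \<longrightarrow>
        (if \<exists>j. at_link cen E f g (loc u t) t j \<and> (\<forall>v\<in>U. loc v t \<noteq> j)
         then at_link cen E f g (loc u t) t (loc u s) \<and> (\<forall>v\<in>U. loc v t \<noteq> loc u s)
         else loc u s = loc u t)"
proof -
  have "\<forall>u\<in>U. \<forall>t\<ge>0. \<exists>\<delta>>0. \<forall>s. t < s \<and> s \<le> t + \<delta> \<longrightarrow>
        (if \<exists>j. at_link cen E f g (loc u t) t j \<and> (\<forall>v\<in>U. loc v t \<noteq> j)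
         then at_link cen E f g (loc u t) t (loc u s) \<and> (\<forall>v\<in>U. loc v t \<noteq> loc u s)
         else loc u s = loc u t)"
    using assms(1)[unfolded partial_run_def] by (elim conjE)
  thus ?thesis using assms(2,3) by blast
qed

lemma rw_left:
  assumes "ring_walk n cen E f g w t0" "t > t0"
  shows "\<exists>\<delta>>0. \<forall>s. t - \<delta> < s \<and> s \<le> t \<longrightarrow> w s = w t"
proof -
  have "\<forall>t>t0. \<exists>\<delta>>0. \<forall>s. t - \<delta> < s \<and> s \<le> t \<longrightarrow> w s = w t"
    using assms(1)[unfolded ring_walk_def] by (elim conjE)
  thus ?thesis using assms(2) by blast
qed

lemma rw_right:
  assumes "ring_walk n cen E f g w t0" "t \<ge> t0"
  shows "\<exists>\<delta>>0. \<forall>s. t < s \<and> s \<le> t + \<delta> \<longrightarrow>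
        (if \<exists>j. at_link cen E f g (w t) t j
         then at_link cen E f g (w t) t (w s)
         else w s = w t)"
proof -
  have "\<forall>t\<ge>t0. \<exists>\<delta>>0. \<forall>s. t < s \<and> s \<le> t + \<delta> \<longrightarrow>
        (if \<exists>j. at_link cen E f g (w t) t j
         then at_link cen E f g (w t) t (w s)
         else w s = w t)"
    using assms(1)[unfolded ring_walk_def] by (elim conjE)
  thus ?thesis using assms(2) by blast
qed

lemma sync_link:
  assumes "scs n cen \<epsilon> E f g" "at_link cen E f g a t b"
  shows "at_link cen E f g b t a"
  using assms unfolding scs_def comm_graph_def synchronized_def at_link_def by blast

lemma starving_follows:
  assumes scs: "scs n cen \<epsilon> E f g" and pr: "partial_run n cen E f g U loc"
    and u: "u \<in> U" and st: "starving cen E f g U loc u"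
    and rw: "ring_walk n cen E f g w t0" and w0: "w t0 = loc u t0" and t0: "t0 \<ge> 0" and T: "t0 \<le> T"
  shows "loc u T = w T"
proof (rule real_ind[of t0 T "\<lambda>s. loc u s = w s", OF T w0[symmetric]])
  fix \<tau> assume a: "t0 < \<tau>" "\<tau> \<le> T" and IH: "\<And>s. t0 \<le> s \<Longrightarrow> s < \<tau> \<Longrightarrow> loc u s = w s"
  obtain d1 where d1: "d1 > 0" "\<forall>s. \<tau> - d1 < s \<and> s \<le> \<tau> \<longrightarrow> loc u s = loc u \<tau>"
    using pr_left[OF pr u order_le_less_trans[OF t0 a(1)]] by blast
  obtain d2 where d2: "d2 > 0" "\<forall>s. \<tau> - d2 < s \<and> s \<le> \<tau> \<longrightarrow> w s = w \<tau>"
    using rw_left[OF rw a(1)] by blast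
  define s where "s = max t0 (\<tau> - min d1 d2 / 2)"
  have "t0 \<le> s" "s < \<tau>" "\<tau> - d1 < s" "\<tau> - d2 < s" "s \<le> \<tau>" using a d1 d2 by (auto simp: s_def)
  hence "loc u s = loc u \<tau>" "w s = w \<tau>" using d1(2) d2(2) by blast+
  thus "loc u \<tau> = w \<tau>" using IH[of s] \<open>t0 \<le> s\<close> \<open>s < \<tau>\<close> by simp
next
  fix \<tau> assume a: "t0 \<le> \<tau>" "\<tau> < T" and eq: "loc u \<tau> = w \<tau>"
  obtain d1 where d1: "d1 > 0" "\<forall>s. \<tau> < s \<and> s \<le> \<tau> + d1 \<longrightarrow>
        (if \<exists>j. at_link cen E f g (loc u \<tau>) \<tau> j \<and> (\<forall>v\<in>U. loc v \<tau> \<noteq> j)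
         then at_link cen E f g (loc u \<tau>) \<tau> (loc u s) \<and> (\<forall>v\<in>U. loc v \<tau> \<noteq> loc u s)
         else loc u s = loc u \<tau>)"
    using pr_right[OF pr u order_trans[OF t0 a(1)]] by blast
  obtain d2 where d2: "d2 > 0" "\<forall>s. \<tau> < s \<and> s \<le> \<tau> + d2 \<longrightarrow>
        (if \<exists>j. at_link cen E f g (w \<tau>) \<tau> j
         then at_link cen E f g (w \<tau>) \<tau> (w s)
         else w s = w \<tau>)"
    using rw_right[OF rw a(1)] by blast
  show "\<exists>\<delta>>0. \<forall>s. \<tau> < s \<and> s \<le> \<tau> + \<delta> \<longrightarrow> loc u s = w s"
  proof (intro exI[of _ "min d1 d2"] conjI allI impI)
    show "min d1 d2 > 0" using d1 d2 by simp
    fix s assume s: "\<tau> < s \<and> s \<le> \<tau> + min d1 d2"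
    show "loc u s = w s"
    proof (cases "\<exists>j. at_link cen E f g (w \<tau>) \<tau> j")
      case True
      then obtain j where j: "at_link cen E f g (loc u \<tau>) \<tau> j" using eq by auto
      have "\<forall>v\<in>U. loc v \<tau> \<noteq> j" using st[unfolded starving_def, rule_format, of \<tau> j] j a t0 by simp
      hence cond: "\<exists>j. at_link cen E f g (loc u \<tau>) \<tau> j \<and> (\<forall>v\<in>U. loc v \<tau> \<noteq> j)" using j by blast
      have s1: "\<tau> < s \<and> s \<le> \<tau> + d1" "\<tau> < s \<and> s \<le> \<tau> + d2" using s by auto
      have l1: "at_link cen E f g (loc u \<tau>) \<tau> (loc u s)" using d1(2)[rule_format, OF s1(1)] cond by (simp only: if_P)
      have l2: "at_link cen E f g (loc u \<tau>) \<tau> (w s)" using d2(2)[rule_format, OF s1(2)] True eq by (simp only: if_P)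
      show ?thesis using link_unique[OF scs l1 l2] .
    next
      case False
      hence ncu: "\<not> (\<exists>j. at_link cen E f g (loc u \<tau>) \<tau> j \<and> (\<forall>v\<in>U. loc v \<tau> \<noteq> j))" using eq by auto
      have s1: "\<tau> < s \<and> s \<le> \<tau> + d1" "\<tau> < s \<and> s \<le> \<tau> + d2" using s by auto
      have "loc u s = loc u \<tau>" using d1(2)[rule_format, OF s1(1)] ncu by (simp only: if_False)
      moreover have "w s = w \<tau>" using d2(2)[rule_format, OF s1(2)] False by (simp only: if_False)
      ultimately show ?thesis using eq by simp
    qed
  qed
qed

lemma occupied:
  assumes scs: "scs n cen \<epsilon> E f g" and pr: "partial_run n cen E f g U loc"
    and u: "u \<in> U"
    and rw: "ring_walk n cen E f g w t0" and w0: "w t0 = loc u t0" and t0: "t0 \<ge> 0" and T: "t0 \<le> T"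
  shows "\<exists>v\<in>U. loc v T = w T"
proof (rule real_ind[of t0 T "\<lambda>s. \<exists>v\<in>U. loc v s = w s", OF T])
  show "\<exists>v\<in>U. loc v t0 = w t0" using u w0 by auto
next
  fix \<tau> assume a: "t0 < \<tau>" "\<tau> \<le> T" and IH: "\<And>s. t0 \<le> s \<Longrightarrow> s < \<tau> \<Longrightarrow> \<exists>v\<in>U. loc v s = w s"
  have "\<forall>v\<in>U. \<exists>\<delta>>0. \<forall>s. \<tau> - \<delta> < s \<and> s \<le> \<tau> \<longrightarrow> loc v s = loc v \<tau>"
    using pr_left[OF pr _ order_le_less_trans[OF t0 a(1)]] by blast
  moreover have "finite U" using pr[unfolded partial_run_def] by (elim conjE)
  ultimately obtain d1 where d1: "d1 > 0" "\<forall>v\<in>U. \<forall>s. \<tau> - d1 < s \<and> s \<le> \<tau> \<longrightarrow> loc v s = loc v \<tau>"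
    using fin_delta[of U \<tau> "\<lambda>v s. loc v s = loc v \<tau>"] by blast
  obtain d2 where d2: "d2 > 0" "\<forall>s. \<tau> - d2 < s \<and> s \<le> \<tau> \<longrightarrow> w s = w \<tau>"
    using rw_left[OF rw a(1)] by blast
  define s where "s = max t0 (\<tau> - min d1 d2 / 2)"
  have "t0 \<le> s" "s < \<tau>" "\<tau> - d1 < s" "\<tau> - d2 < s" "s \<le> \<tau>" using a d1 d2 by (auto simp: s_def)
  moreover obtain v where v: "v \<in> U" "loc v s = w s" using IH[of s] calculation by blast
  ultimately have "loc v s = loc v \<tau>" "w s = w \<tau>" using d1(2) d2(2) by blast+
  thus "\<exists>v\<in>U. loc v \<tau> = w \<tau>" using v by metis
next
  fix \<tau> assume a: "t0 \<le> \<tau>" "\<tau> < T" and ex: "\<exists>v\<in>U. loc v \<tau> = w \<tau>"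
  then obtain v where v: "v \<in> U" "loc v \<tau> = w \<tau>" by auto
  have run: "\<And>x. x \<in> U \<Longrightarrow> \<exists>d>0. \<forall>s. \<tau> < s \<and> s \<le> \<tau> + d \<longrightarrow>
        (if \<exists>j. at_link cen E f g (loc x \<tau>) \<tau> j \<and> (\<forall>v\<in>U. loc v \<tau> \<noteq> j)
         then at_link cen E f g (loc x \<tau>) \<tau> (loc x s) \<and> (\<forall>v\<in>U. loc v \<tau> \<noteq> loc x s)
         else loc x s = loc x \<tau>)"
    by (rule pr_right[OF pr _ order_trans[OF t0 a(1)]])
  obtain d2 where d2: "d2 > 0" "\<forall>s. \<tau> < s \<and> s \<le> \<tau> + d2 \<longrightarrow>
        (if \<exists>j. at_link cen E f g (w \<tau>) \<tau> j
         then at_link cen E f g (w \<tau>) \<tau> (w s)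
         else w s = w \<tau>)"
    using rw_right[OF rw a(1)] by blast
  show "\<exists>\<delta>>0. \<forall>s. \<tau> < s \<and> s \<le> \<tau> + \<delta> \<longrightarrow> (\<exists>v\<in>U. loc v s = w s)"
  proof (cases "\<exists>j. at_link cen E f g (w \<tau>) \<tau> j")
    case True
    then obtain b where b: "at_link cen E f g (loc v \<tau>) \<tau> b" using v by auto
    have wlink: "w s = b" if s2: "\<tau> < s \<and> s \<le> \<tau> + d2" for s
    proof -
      have "at_link cen E f g (w \<tau>) \<tau> (w s)" using d2(2)[rule_format, OF s2] True by (simp only: if_P)
      hence l2: "at_link cen E f g (loc v \<tau>) \<tau> (w s)" using v by simp
      show ?thesis using link_unique[OF scs l2 b] .
    qed
    show ?thesis
    proof (cases "\<forall>x\<in>U. loc x \<tau> \<noteq> b")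
      case True
      have cond: "\<exists>j. at_link cen E f g (loc v \<tau>) \<tau> j \<and> (\<forall>x\<in>U. loc x \<tau> \<noteq> j)" using b True by blast
      obtain d1 where d1: "d1 > 0" "\<forall>s. \<tau> < s \<and> s \<le> \<tau> + d1 \<longrightarrow>
        (if \<exists>j. at_link cen E f g (loc v \<tau>) \<tau> j \<and> (\<forall>v\<in>U. loc v \<tau> \<noteq> j)
         then at_link cen E f g (loc v \<tau>) \<tau> (loc v s) \<and> (\<forall>x\<in>U. loc x \<tau> \<noteq> loc v s)
         else loc v s = loc v \<tau>)"
        using run[OF v(1)] by (elim exE conjE) (rule that, assumption+)
      show ?thesis
      proof (intro exI[of _ "min d1 d2"] conjI allI impI)
        show "min d1 d2 > 0" using d1 d2 by simp
        fix s assume s: "\<tau> < s \<and> s \<le> \<tau> + min d1 d2"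
        have s1: "\<tau> < s \<and> s \<le> \<tau> + d1" "\<tau> < s \<and> s \<le> \<tau> + d2" using s by auto
        have l1: "at_link cen E f g (loc v \<tau>) \<tau> (loc v s)"
          using d1(2)[rule_format, OF s1(1)] cond by (simp only: if_P)
        have "loc v s = b" using link_unique[OF scs l1 b] .
        thus "\<exists>v\<in>U. loc v s = w s" using wlink[OF s1(2)] v(1) by metis
      qed
    next
      case False
      then obtain v2 where v2: "v2 \<in> U" "loc v2 \<tau> = b" by auto
      have nc: "\<not> (\<exists>j. at_link cen E f g (loc v2 \<tau>) \<tau> j \<and> (\<forall>x\<in>U. loc x \<tau> \<noteq> j))"
      proof
        assume "\<exists>j. at_link cen E f g (loc v2 \<tau>) \<tau> j \<and> (\<forall>x\<in>U. loc x \<tau> \<noteq> j)"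
        then obtain j where j: "at_link cen E f g b \<tau> j" "\<forall>x\<in>U. loc x \<tau> \<noteq> j" using v2 by auto
        have "at_link cen E f g b \<tau> (loc v \<tau>)" using sync_link[OF scs b] .
        hence "j = loc v \<tau>" using link_unique[OF scs j(1)] by blast
        thus False using j(2) v(1) by auto
      qed
      obtain d1 where d1: "d1 > 0" "\<forall>s. \<tau> < s \<and> s \<le> \<tau> + d1 \<longrightarrow>
        (if \<exists>j. at_link cen E f g (loc v2 \<tau>) \<tau> j \<and> (\<forall>v\<in>U. loc v \<tau> \<noteq> j)
         then at_link cen E f g (loc v2 \<tau>) \<tau> (loc v2 s) \<and> (\<forall>v\<in>U. loc v \<tau> \<noteq> loc v2 s)
         else loc v2 s = loc v2 \<tau>)"
        using run[OF v2(1)] by (elim exE conjE) (rule that, assumption+)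
      show ?thesis
      proof (intro exI[of _ "min d1 d2"] conjI allI impI)
        show "min d1 d2 > 0" using d1 d2 by simp
        fix s assume s: "\<tau> < s \<and> s \<le> \<tau> + min d1 d2"
        have s1: "\<tau> < s \<and> s \<le> \<tau> + d1" "\<tau> < s \<and> s \<le> \<tau> + d2" using s by auto
        have "loc v2 s = loc v2 \<tau>" using d1(2)[rule_format, OF s1(1)] nc by (simp only: if_False)
        thus "\<exists>v\<in>U. loc v s = w s" using wlink[OF s1(2)] v2 by metis
      qed
    qed
  next
    case False
    hence nc: "\<not> (\<exists>j. at_link cen E f g (loc v \<tau>) \<tau> j \<and> (\<forall>x\<in>U. loc x \<tau> \<noteq> j))" using v by auto
    obtain d1 where d1: "d1 > 0" "\<forall>s. \<tau> < s \<and> s \<le> \<tau> + d1 \<longrightarrow>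
        (if \<exists>j. at_link cen E f g (loc v \<tau>) \<tau> j \<and> (\<forall>v\<in>U. loc v \<tau> \<noteq> j)
         then at_link cen E f g (loc v \<tau>) \<tau> (loc v s) \<and> (\<forall>x\<in>U. loc x \<tau> \<noteq> loc v s)
         else loc v s = loc v \<tau>)"
      using run[OF v(1)] by (elim exE conjE) (rule that, assumption+)
    show ?thesis
    proof (intro exI[of _ "min d1 d2"] conjI allI impI)
      show "min d1 d2 > 0" using d1 d2 by simp
      fix s assume s: "\<tau> < s \<and> s \<le> \<tau> + min d1 d2"
      have s1: "\<tau> < s \<and> s \<le> \<tau> + d1" "\<tau> < s \<and> s \<le> \<tau> + d2" using s by auto
      have "loc v s = loc v \<tau>" using d1(2)[rule_format, OF s1(1)] nc by (simp only: if_False)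
      moreover have "w s = w \<tau>" using d2(2)[rule_format, OF s1(2)] False by (simp only: if_False)
      ultimately show "\<exists>v'\<in>U. loc v' s = w s" using v by metis
    qed
  qed
qed

lemma one_side:
  assumes scs: "scs n cen \<epsilon> E f g" and pr: "partial_run n cen E f g U loc"
    and t0: "t0 \<ge> 0" and u: "u \<in> U" and u': "u' \<in> U"
    and p: "path_to_crossing n cen E f g r (loc u t0) t0 L i j"
    and p': "path_to_crossing n cen E f g r' (loc u' t0) t0 L j i"
  shows "\<not> starving cen E f g U loc u"
proof
  assume st: "starving cen E f g U loc u"
  define T where "T = t0 + L / (2 * pi)"
  have L: "0 \<le> L" using p by (simp add: path_to_crossing_def)
  have T: "t0 \<le> T" using L by (simp add: T_def)
  obtain w where w: "ring_walk n cen E f g w t0" "w t0 = loc u t0" "w T = i" "at_link cen E f g i T j"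
    using p unfolding path_to_crossing_def T_def by blast
  obtain w' where w': "ring_walk n cen E f g w' t0" "w' t0 = loc u' t0" "w' T = j"
    using p' unfolding path_to_crossing_def T_def by blast
  have "loc u T = i" using starving_follows[OF scs pr u st w(1,2) t0 T] w(3) by simp
  hence none: "\<forall>v\<in>U. loc v T \<noteq> j" using st w(4) T t0 unfolding starving_def by auto
  obtain v where "v \<in> U" "loc v T = w' T" using occupied[OF scs pr u' w'(1,2) t0 T] by blast
  thus False using none w'(3) by auto
qed

theorem lemma5:
  fixes n m :: nat and cen :: "nat \<Rightarrow> complex" and \<epsilon> :: real
    and E :: "nat \<Rightarrow> nat \<Rightarrow> bool" and f :: "nat \<Rightarrow> real" and g :: "nat \<Rightarrow> int"
    and U :: "'r set" and loc :: "'r \<Rightarrow> real \<Rightarrow> nat"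
    and r r' :: "complex set" and i j :: nat and c :: complex
    and u u' :: 'r and t0 L :: real
  assumes "partial_scs m n cen \<epsilon> E f g U loc"
    and "is_ring n cen E f g r" and "is_ring n cen E f g r'"
    and "rings_cross_at n cen E f g r r' i j c"
    and "t0 \<ge> 0" and "u \<in> U" and "u' \<in> U"
    and "rpos cen f g (loc u t0) t0 \<in> r" and "rpos cen f g (loc u' t0) t0 \<in> r'"
    and "path_to_crossing n cen E f g r (loc u t0) t0 L i j"
    and "path_to_crossing n cen E f g r' (loc u' t0) t0 L j i"
  shows "\<not> starving cen E f g U loc u \<and> \<not> starving cen E f g U loc u'"
  proof -
  have scs: "scs n cen \<epsilon> E f g" and pr: "partial_run n cen E f g U loc"
    using assms(1) by (auto simp: partial_scs_def)
  show ?thesis using one_side[OF scs pr assms(5,6,7,10,11)] one_side[OF scs pr assms(5,7,6,11,10)] by blast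
qed

end
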